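(* For generic $a,b\in\mathbb{C}$ define $\mathbf Q_0^{(3)}(n;a;b)=1+\tfrac{3n}{a}$ and, for $k\ge1$, $$a(\tfrac12-k-b)(\tfrac12-k+b)\,\mathbf Q_k^{(3)}(n;a;b)=\frac{3n+2k+a}{2k+a}(n+a)(n+\tfrac12-k-b)(n+\tfrac12-k+b)\,\mathbf Q_{k-1}^{(3)}(n;a+1;b)$$ $$\qquad+8\,\frac{3n-4k+a}{2k+a}\,n\,(n-\tfrac14+\tfrac k2+\tfrac a2+\tfrac b2)(n-\tfrac14+\tfrac k2+\tfrac a2-\tfrac b2)\,\mathbf Q_{k-1}^{(3)}(n-1;a+1;b).$$ Then $\mathbf Q_k^{(3)}$ is a polynomial of degree $1+4k$ in $n$, and for all integers $k\ge0$, near $x=0$, $${}_3F_2\!\left[\begin{matrix}\tfrac13+\tfrac{2k}3+\tfrac a3,\ \tfrac23+\tfrac{2k}3+\tfrac a3,\ 1+\tfrac{2k}3+\tfrac a3\\ \tfrac34+\tfrac k2+\tfrac a2+\tfrac b2,\ \tfrac34+\tfrac k2+\tfrac a2-\tfrac b2\end{matrix}\,\Big|\,-\frac{27x}{(1-4x)^3}\right]$$ $$=(1+8x)^{-1-2k}(1-4x)^{1+2k+a}\sum_{n=0}^\infty\frac{(a)_n(\tfrac12-k-b)_n(\tfrac12-k+b)_n}{n!\,(\tfrac34+\tfrac k2+\tfrac a2+\tfrac b2)_n(\tfrac34+\tfrac k2+\tfrac a2-\tfrac b2)_n}\,\mathbf Q_k^{(3)}(n;a;b)\,x^n.$$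
   Context: $(c)_n$ denotes the Pochhammer symbol, $(c)_0=1$; ${}_pF_q$ is the generalized hypergeometric series. Parameters are generic so that no lower parameter is a nonpositive integer and no division by zero occurs in the recurrence. *)

theory Defs
  imports "HOL-Analysis.Analysis" "HOL-Computational_Algebra.Polynomial"
begin

definition hyp3F2 :: "complex \<Rightarrow> complex \<Rightarrow> complex \<Rightarrow> complex \<Rightarrow> complex \<Rightarrow> complex \<Rightarrow> complex" where
  "hyp3F2 a1 a2 a3 b1 b2 z =
     (\<Sum>n. pochhammer a1 n * pochhammer a2 n * pochhammer a3 n
           / (pochhammer b1 n * pochhammer b2 n * fact n) * z ^ n)"

fun Q3 :: "nat \<Rightarrow> complex \<Rightarrow> complex \<Rightarrow> complex \<Rightarrow> complex" where
  "Q3 0 n a b = 1 + 3 * n / a"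
| "Q3 (Suc k) n a b =
     ( (3* n + 2* of_nat (Suc k) + a) / (2* of_nat (Suc k) + a) * (n + a)
         * (n + 1/2 - of_nat (Suc k) - b) * (n + 1/2 - of_nat (Suc k) + b) * Q3 k n (a+1) b
     + 8 * (3* n - 4* of_nat (Suc k) + a) / (2* of_nat (Suc k) + a) * n
         * (n - 1/4 + of_nat (Suc k)/2 + a/2 + b/2) * (n - 1/4 + of_nat (Suc k)/2 + a/2 - b/2)
         * Q3 k (n - 1) (a+1) b )
     / (a * (1/2 - of_nat (Suc k) - b) * (1/2 - of_nat (Suc k) + b))"

end

theory Submission
  imports Defs "HOL-Complex_Analysis.Complex_Analysis"
begin


definition V :: "complex \<Rightarrow> complex fps" where
  "V s = fps_compose (fps_binomial s) (fps_const (-4) * fps_X)"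

lemma V_nth: "V s $ n = (-4)^n * (s gchoose n)"
  by (simp add: V_def fps_compose_linear)

lemma V_add: "V (s + t) = V s * V t"
  by (simp add: V_def fps_binomial_add_mult fps_compose_mult_distrib)

lemma V_0 [simp]: "V 0 = 1"
  by (simp add: V_def)

lemma V_1: "V 1 = 1 - 4 * fps_X"
  by (simp add: V_def fps_binomial_1 fps_compose_add_distrib numeral_fps_const)

lemma V_deriv: "fps_deriv (V s) = - 4 * fps_const s * V (s - 1)"
proof -
  have "fps_deriv (V s) $ n = (- 4 * fps_const s * V (s - 1)) $ n" for n
  proof -
    have "fps_deriv (V s) $ n = of_nat (Suc n) * ((-4)^(Suc n) * (s gchoose Suc n))"
      by (simp add: V_nth)
    also have "\<dots> = (-4)^(Suc n) * (of_nat (Suc n) * (s gchoose Suc n))" by simp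
    also have "\<dots> = (-4)^(Suc n) * (s * ((s-1) gchoose n))"
      by (subst gbinomial_absorption) simp
    finally show ?thesis by (simp add: V_nth numeral_fps_const)
  qed
  thus ?thesis by (simp add: fps_eq_iff)
qed

lemma V_inv: "V s * V (-s) = 1"
  by (simp flip: V_add)

definition Zf :: "complex fps" where
  "Zf = - 27 * fps_X * V (-3)"

lemma Zf_0 [simp]: "Zf $ 0 = 0"
  by (simp add: Zf_def)

lemma V_split: "V s = V 1 * V (s - 1)"
  by (simp flip: V_add)

lemma V_m3: "V (-3) = (1 - 4 * fps_X) * V (-4)"
  using V_split[of "-3"] by (simp add: V_1)

lemma Zf_alt: "Zf = - 27 * fps_X * (1 - 4 * fps_X) * V (-4)"
  by (simp add: Zf_def V_m3 mult.assoc)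

lemma Zf_deriv: "fps_deriv Zf = - 27 * (1 + 8 * fps_X) * V (-4)"
proof -
  have d: "fps_deriv (V (-3)) = 12 * V (-4)"
    by (simp add: V_deriv numeral_fps_const)
  have "fps_deriv Zf = - 27 * (V (-3) + fps_X * fps_deriv (V (-3)))"
    by (simp add: Zf_def algebra_simps)
  also have "\<dots> = - 27 * (V (-3) + fps_X * (12 * V (-4)))"
    by (simp only: d)
  also have "\<dots> = - 27 * ((1 - 4 * fps_X) * V (-4) + fps_X * (12 * V (-4)))"
    by (simp only: V_m3)
  also have "\<dots> = - 27 * (1 + 8 * fps_X) * V (-4)"
    by algebra
  finally show ?thesis .
qed

lemma Zf_key: "(1 + 8 * fps_X) * Zf = fps_X * V 1 * fps_deriv Zf"
  unfolding Zf_deriv unfolding Zf_alt V_1 by algebra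

lemma core:
  fixes B :: complex and F :: "complex fps"
  assumes B: "B \<noteq> 0"
  shows "fps_const B * (1 + 8 * fps_X) * V (-B-1) * ((F + fps_const (3/B) * fps_X * fps_deriv F) oo Zf)
     = 3 * fps_X * fps_deriv (V (-B) * (F oo Zf)) + fps_const B * V (-B) * (F oo Zf)"
proof -
  define P where "P = F oo Zf"
  define Q where "Q = fps_deriv F oo Zf"
  define W where "W = V (-B-1)"
  define b where "b = fps_const B"
  define b' where "b' = fps_const (3/B)"
  have c1: "(F + b' * fps_X * fps_deriv F) oo Zf = P + b' * Zf * Q"
    by (simp add: P_def Q_def b'_def fps_compose_add_distrib fps_compose_mult_distrib)
  have dV: "fps_deriv (V (-B)) = 4 * b * W"
    by (simp add: V_deriv W_def b_def flip: fps_const_neg)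
  have c2: "fps_deriv (V (-B) * (F oo Zf)) = fps_deriv (V (-B)) * P + V (-B) * Q * fps_deriv Zf"
    by (simp add: P_def Q_def fps_compose_deriv algebra_simps)
  have c3: "V (-B) = (1 - 4 * fps_X) * W"
    unfolding W_def using V_split[of "-B"] by (simp add: V_1)
  have c4: "b * b' = 3"
    using B by (simp add: b_def b'_def numeral_fps_const)
  have key: "(1 + 8 * fps_X) * Zf = fps_X * (1 - 4 * fps_X) * fps_deriv Zf"
    using Zf_key by (simp add: V_1)
  have L: "b * (1 + 8 * fps_X) * W * ((F + b' * fps_X * fps_deriv F) oo Zf) = b * (1 + 8 * fps_X) * W * (P + b' * Zf * Q)"
    unfolding c1 ..
  have R: "3 * fps_X * fps_deriv (V (-B) * (F oo Zf)) + b * V (-B) * (F oo Zf)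
     = 3 * fps_X * ((4 * b * W) * P + ((1 - 4 * fps_X) * W) * Q * fps_deriv Zf) + b * ((1 - 4 * fps_X) * W) * P"
    unfolding c2 unfolding dV unfolding c3 P_def ..
  have "b * (1 + 8 * fps_X) * W * (P + b' * Zf * Q)
      = b * (1 + 8 * fps_X) * W * P + (b * b') * ((1 + 8 * fps_X) * Zf) * W * Q"
    by algebra
  also have "\<dots> = b * (1 + 8 * fps_X) * W * P + 3 * (fps_X * (1 - 4 * fps_X) * fps_deriv Zf) * W * Q"
    by (simp only: c4 key)
  also have "\<dots> = 3 * fps_X * ((4 * b * W) * P + ((1 - 4 * fps_X) * W) * Q * fps_deriv Zf) + b * ((1 - 4 * fps_X) * W) * P"
    by algebra
  finally have "b * (1 + 8 * fps_X) * W * ((F + b' * fps_X * fps_deriv F) oo Zf) = 3 * fps_X * fps_deriv (V (-B) * (F oo Zf)) + b * V (-B) * (F oo Zf)"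
    using L R by simp
  thus ?thesis by (simp only: b_def b'_def W_def)
qed



lemma poch_shift: "pochhammer x n * (x + of_nat n) = x * pochhammer (x+1) n"
  by (metis pochhammer_rec pochhammer_rec' mult.commute)

definition HF :: "complex \<Rightarrow> complex \<Rightarrow> complex \<Rightarrow> complex \<Rightarrow> complex \<Rightarrow> complex fps" where
  "HF u1 u2 u3 v1 v2 = Abs_fps (\<lambda>n. pochhammer u1 n * pochhammer u2 n * pochhammer u3 n
           / (pochhammer v1 n * pochhammer v2 n * fact n))"

definition FA :: "complex \<Rightarrow> complex \<Rightarrow> complex \<Rightarrow> complex fps" where
  "FA c d A = HF (A/3) ((A+1)/3) ((A+2)/3) c d"

lemma gen_shift: "P * (x + m) = x * R \<Longrightarrow> (x::complex) \<noteq> 0 \<Longrightarrow> R = P * (1 + m/x)"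
  by (simp add: field_simps)

lemma gen_contig: "(P1::complex) * P2 * (P0 * (1 + t)) / D = P0 * P1 * P2 / D + t * (P0 * P1 * P2 / D)"
  by (cases "D = 0") (simp_all add: field_simps)

lemma div_helper: "N * y = c * N' \<Longrightarrow> N / D * y = c * (N' / (D::complex))"
  by (metis times_divide_eq_left times_divide_eq_right)

lemma FA_contig:
  assumes B: "B \<noteq> 0"
  shows "FA c d (B+1) = FA c d B + fps_const (3/B) * fps_X * fps_deriv (FA c d B)"
proof -
  have "FA c d (B+1) $ n = (FA c d B + fps_const (3/B) * fps_X * fps_deriv (FA c d B)) $ n" for n
  proof -
    have e1: "(B+1+1)/3 = (B+2)/3" "(B+1+2)/3 = B/3 + 1" by (simp_all add: field_simps)
    have "pochhammer (B/3+1) n = pochhammer (B/3) n * (1 + of_nat n / (B/3))"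
      using B by (intro gen_shift poch_shift) simp
    also have "of_nat n / (B/3) = 3 * of_nat n / B" by simp
    finally have e2: "pochhammer (B/3+1) n = pochhammer (B/3) n * (1 + 3 * of_nat n / B)" .
    have e3: "(fps_const (3/B) * fps_X * fps_deriv (FA c d B)) $ n = 3 * of_nat n / B * FA c d B $ n"
      by (cases n) (simp_all add: fps_X_mult_nth mult.assoc del: of_nat_Suc)
    show ?thesis
      unfolding fps_add_nth e3 unfolding FA_def HF_def fps_nth_Abs_fps e1 e2
      by (rule gen_contig)
  qed
  thus ?thesis by (simp add: fps_eq_iff)
qed

definition tt :: "complex \<Rightarrow> nat \<Rightarrow> complex \<Rightarrow> nat \<Rightarrow> complex" where
 "tt b k a n = pochhammer a n * pochhammer (1/2 - of_nat k - b) n * pochhammer (1/2 - of_nat k + b) n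
    / (fact n * pochhammer (3/4 + of_nat k/2 + a/2 + b/2) n * pochhammer (3/4 + of_nat k/2 + a/2 - b/2) n)"

definition Gk :: "complex \<Rightarrow> nat \<Rightarrow> complex \<Rightarrow> complex fps" where
  "Gk b k a = Abs_fps (\<lambda>n. tt b k a n * Q3 k (of_nat n) a b)"

lemma tt_A:
  "tt b (Suc k) a n * ((of_nat n + a) * (of_nat n + (1/2 - of_nat (Suc k) - b)) * (of_nat n + (1/2 - of_nat (Suc k) + b)))
   = a * (1/2 - of_nat (Suc k) - b) * (1/2 - of_nat (Suc k) + b) * tt b k (a+1) n"
proof -
  have l1: "3/4 + of_nat k/2 + (a+1)/2 + b/2 = 3/4 + of_nat (Suc k)/2 + a/2 + (b::complex)/2"
       "3/4 + of_nat k/2 + (a+1)/2 - b/2 = 3/4 + of_nat (Suc k)/2 + a/2 - (b::complex)/2"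
    by (simp_all add: field_simps)
  have l2: "1/2 - of_nat (Suc k) - b + 1 = 1/2 - of_nat k - (b::complex)"
           "1/2 - of_nat (Suc k) + b + 1 = 1/2 - of_nat k + (b::complex)"
    by (simp_all add: field_simps)
  have "pochhammer a n * pochhammer (1/2 - of_nat (Suc k) - b) n * pochhammer (1/2 - of_nat (Suc k) + b) n
        * ((of_nat n + a) * (of_nat n + (1/2 - of_nat (Suc k) - b)) * (of_nat n + (1/2 - of_nat (Suc k) + b)))
      = (pochhammer a n * (a + of_nat n)) * (pochhammer (1/2 - of_nat (Suc k) - b) n * (1/2 - of_nat (Suc k) - b + of_nat n))
        * (pochhammer (1/2 - of_nat (Suc k) + b) n * (1/2 - of_nat (Suc k) + b + of_nat n))"
    by (simp add: algebra_simps)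
  also have "\<dots> = a * (1/2 - of_nat (Suc k) - b) * (1/2 - of_nat (Suc k) + b) *
      (pochhammer (a+1) n * pochhammer (1/2 - of_nat k - b) n * pochhammer (1/2 - of_nat k + b) n)"
    unfolding poch_shift l2 by (simp add: algebra_simps)
  finally show ?thesis
    unfolding tt_def l1 by (rule div_helper)
qed

lemma gen_B: "(y1::complex) \<noteq> 0 \<Longrightarrow> y2 \<noteq> 0 \<Longrightarrow> y3 \<noteq> 0 \<Longrightarrow>
   (x1*n1*(x2*n2)*(x3*n3)) / (y1*z1*(y2*z2)*(y3*z3)) * (y1*y2*y3) = x1*x2*x3*(n1*n2*n3/(z1*z2*z3))"
  by (cases "z1*z2*z3 = 0") (auto simp: field_simps)

lemma tt_B:
  assumes c: "3/4 + of_nat (Suc k)/2 + a/2 + b/2 + of_nat m \<noteq> (0::complex)"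
      and d: "3/4 + of_nat (Suc k)/2 + a/2 - b/2 + of_nat m \<noteq> (0::complex)"
  shows "tt b (Suc k) a (Suc m) * (of_nat (Suc m) * (3/4 + of_nat (Suc k)/2 + a/2 + b/2 + of_nat m)
            * (3/4 + of_nat (Suc k)/2 + a/2 - b/2 + of_nat m))
   = a * (1/2 - of_nat (Suc k) - b) * (1/2 - of_nat (Suc k) + b) * tt b k (a+1) m"
proof -
  have l1: "3/4 + of_nat k/2 + (a+1)/2 + b/2 = 3/4 + of_nat (Suc k)/2 + a/2 + (b::complex)/2"
       "3/4 + of_nat k/2 + (a+1)/2 - b/2 = 3/4 + of_nat (Suc k)/2 + a/2 - (b::complex)/2"
    by (simp_all add: field_simps)
  have l2: "1/2 - of_nat (Suc k) - b + 1 = 1/2 - of_nat k - (b::complex)"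
           "1/2 - of_nat (Suc k) + b + 1 = 1/2 - of_nat k + (b::complex)"
    by (simp_all add: field_simps)
  show ?thesis
    unfolding tt_def l1 pochhammer_rec[of a] pochhammer_rec[of "1/2 - of_nat (Suc k) - b"]
      pochhammer_rec[of "1/2 - of_nat (Suc k) + b"] l2
      pochhammer_rec'[of "3/4 + of_nat (Suc k)/2 + a/2 + b/2"] pochhammer_rec'[of "3/4 + of_nat (Suc k)/2 + a/2 - b/2"]
      fact_Suc of_nat_mult
    by (rule gen_B[OF _ c d]) (simp del: of_nat_Suc)
qed



lemma theta_nth: "(fps_X * fps_deriv G) $ n = of_nat n * G $ n"
  by (cases n) (simp_all add: fps_X_mult_nth del: of_nat_Suc)

lemma alg_step:
  fixes t g gm Qo Qm x a p q B c d e :: complex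
  assumes tA: "t * ((x + a) * (x + p) * (x + q)) = a*p*q*g"
    and tB: "t * (x * c * d) = a*p*q*gm"
    and nz: "a*p*q \<noteq> 0" "B \<noteq> 0"
  shows "B * (t * (((3*x + B)/B * (x+a) * (x+p) * (x+q) * Qo + 8*e/B * x * c * d * Qm) / (a*p*q)))
     = 3*x*(g*Qo) + B*(g*Qo) + 8*e*(gm*Qm)"
proof -
  have "B * (t * (((3*x + B)/B * (x+a) * (x+p) * (x+q) * Qo + 8*e/B * x * c * d * Qm) / (a*p*q)))
     = ((3*x+B) * (t * ((x + a) * (x + p) * (x + q))) * Qo + 8*e*(t * (x * c * d))*Qm) / (a*p*q)"
    using nz by (simp add: field_simps)
  also have "\<dots> = ((3*x+B) * (a*p*q*g) * Qo + 8*e*(a*p*q*gm)*Qm) / (a*p*q)"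
    by (simp only: tA tB)
  also have "\<dots> = 3*x*(g*Qo) + B*(g*Qo) + 8*e*(gm*Qm)"
    using nz by (simp add: field_simps)
  finally show ?thesis .
qed

lemma alg_step0:
  fixes Qo a p q B :: complex
  assumes "a*p*q \<noteq> 0" "B \<noteq> 0"
  shows "B * (1 * (((3*0 + B)/B * (0+a) * (0+p) * (0+q) * Qo + 8*e/B * 0 * c * d * Qm) / (a*p*q)))
     = B * (1 * Qo)"
  using assms by (simp add: field_simps)

lemma q0_gen: "(y::complex) \<noteq> 0 \<Longrightarrow> a*p*q \<noteq> 0 \<Longrightarrow> (y/y * a * p * q * Q) / (a*p*q) = Q"
  by (simp add: field_simps)

lemma Gk_rec:
  fixes a b :: complex and k :: nat
  assumes a0: "a \<noteq> 0" and p0: "1/2 - of_nat (Suc k) - b \<noteq> 0" and q0: "1/2 - of_nat (Suc k) + b \<noteq> 0"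
    and B0: "2 * of_nat (Suc k) + a \<noteq> 0"
    and c: "\<forall>m::nat. 3/4 + of_nat (Suc k)/2 + a/2 + b/2 + of_nat m \<noteq> 0"
    and d: "\<forall>m::nat. 3/4 + of_nat (Suc k)/2 + a/2 - b/2 + of_nat m \<noteq> 0"
  shows "fps_const (2 * of_nat (Suc k) + a) * Gk b (Suc k) a
    = 3 * fps_X * fps_deriv (Gk b k (a+1)) + fps_const (2 * of_nat (Suc k) + a) * Gk b k (a+1)
      + 8 * fps_X * (3 * fps_X * fps_deriv (Gk b k (a+1))
          + fps_const (2 * of_nat (Suc k) + a - 3 * (2 * of_nat k + 1)) * Gk b k (a+1))"
proof -
  define K :: complex where "K = of_nat (Suc k)"
  define B where "B = 2 * K + a"
  define p where "p = 1/2 - K - b"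
  define q where "q = 1/2 - K + b"
  define E where "E = 2 * K + a - 3 * (2 * of_nat k + 1)"
  define G where "G = Gk b k (a+1)"
  have nz: "a*p*q \<noteq> 0" "B \<noteq> 0" using a0 p0 q0 B0 by (simp_all add: p_def q_def B_def K_def)
  have "(fps_const B * Gk b (Suc k) a) $ n
     = (3 * fps_X * fps_deriv G + fps_const B * G + 8 * fps_X * (3 * fps_X * fps_deriv G + fps_const E * G)) $ n" for n
  proof (cases n)
    case 0
    have Q0: "Q3 (Suc k) 0 a b = Q3 k 0 (a+1) b"
      unfolding Q3.simps(2) by (simp only: mult_zero_right mult_zero_left add_0 add_0_right)
        (rule q0_gen, use a0 p0 q0 B0 in auto)
    have t0: "tt b k' a' 0 = 1" for k' a' by (simp add: tt_def)
    show ?thesis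
      using 0 by (simp add: Gk_def G_def Q0 t0 fps_X_mult_nth theta_nth del: Q3.simps)
  next
    case (Suc m)
    define x :: complex where "x = of_nat (Suc m)"
    define cc where "cc = 3/4 + K/2 + a/2 + b/2 + of_nat m"
    define dd where "dd = 3/4 + K/2 + a/2 - b/2 + of_nat m"
    have e1: "3 * x + 2 * K + a = 3 * x + B" "x + 1/2 - K - b = x + p" "x + 1/2 - K + b = x + q"
       "x - 1/4 + K/2 + a/2 + b/2 = cc" "x - 1/4 + K/2 + a/2 - b/2 = dd" "x - 1 = of_nat m"
       "3 * x - 4 * K + a = 3 * of_nat m + E" "2 * K + a = B"
      by (simp_all add: x_def B_def p_def q_def cc_def dd_def E_def K_def algebra_simps)
    have Qeq: "Q3 (Suc k) x a b = (((3*x + B)/B * (x+a) * (x+p) * (x+q) * Q3 k x (a+1) b + 8*(3 * of_nat m + E)/B * x * cc * dd * Q3 k (of_nat m) (a+1) b) / (a*p*q))"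
      unfolding Q3.simps(2) K_def[symmetric] e1 p_def q_def ..
    have tA: "tt b (Suc k) a (Suc m) * ((x + a) * (x + p) * (x + q)) = a*p*q*tt b k (a+1) (Suc m)"
      using tt_A[of b k a "Suc m"] by (simp only: x_def p_def q_def K_def)
    have tB: "tt b (Suc k) a (Suc m) * (x * cc * dd) = a*p*q*tt b k (a+1) m"
      using tt_B[of k a b m] c d by (simp only: x_def p_def q_def K_def cc_def dd_def) blast
    have lhs: "(fps_const B * Gk b (Suc k) a) $ n = B * (tt b (Suc k) a (Suc m) * Q3 (Suc k) x a b)"
      by (simp add: Gk_def Suc x_def)
    have rhs: "(3 * fps_X * fps_deriv G + fps_const B * G + 8 * fps_X * (3 * fps_X * fps_deriv G + fps_const E * G)) $ n
       = 3*x*(tt b k (a+1) (Suc m) * Q3 k x (a+1) b) + B*(tt b k (a+1) (Suc m) * Q3 k x (a+1) b) + 8*(3 * of_nat m + E)*(tt b k (a+1) m * Q3 k (of_nat m) (a+1) b)"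
      by (simp add: Suc G_def Gk_def fps_X_mult_nth theta_nth mult.assoc x_def algebra_simps del: of_nat_Suc)
    show ?thesis
      unfolding lhs rhs Qeq by (rule alg_step[OF tA tB nz])
  qed
  thus ?thesis by (simp add: fps_eq_iff B_def K_def E_def G_def)
qed



lemma Epow:
  fixes Y :: "complex fps" and c :: complex and j :: nat
  shows "3 * fps_X * fps_deriv ((1 + 8 * fps_X)^j * Y) + fps_const c * ((1 + 8 * fps_X)^j * Y)
      + 8 * fps_X * (3 * fps_X * fps_deriv ((1 + 8 * fps_X)^j * Y) + fps_const (c - 3 * of_nat j) * ((1 + 8 * fps_X)^j * Y))
     = (1 + 8 * fps_X)^j * (1 + 8 * fps_X) * (3 * fps_X * fps_deriv Y + fps_const c * Y)"
proof (cases j)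
  case 0
  then show ?thesis by (simp add: algebra_simps)
next
  case (Suc i)
  define R where "R = (1 + 8 * fps_X :: complex fps)^i"
  define s where "s = (of_nat (Suc i) :: complex fps)"
  have dE: "fps_deriv ((1 + 8 * fps_X :: complex fps)^j) = 8 * s * R"
  proof -
    have d8: "fps_deriv (1 + 8 * fps_X :: complex fps) = 8" by simp
    show ?thesis unfolding Suc fps_deriv_power' d8 diff_Suc_1 R_def s_def by (simp add: mult_ac)
  qed
  have E: "(1 + 8 * fps_X :: complex fps)^j = (1 + 8 * fps_X) * R"
    by (simp add: Suc R_def)
  have C: "fps_const (c - 3 * of_nat j) = fps_const c - 3 * s"
  proof -
    have "fps_const (c - 3 * of_nat j) = fps_const c - fps_const 3 * fps_const (of_nat j)" by simp
    thus ?thesis by (simp only: Suc s_def numeral_fps_const[symmetric] fps_of_nat)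
  qed
  show ?thesis
    unfolding fps_deriv_mult dE C unfolding E by algebra
qed

definition cpar :: "complex \<Rightarrow> nat \<Rightarrow> complex \<Rightarrow> complex" where
  "cpar b k a = 3/4 + of_nat k/2 + a/2 + b/2"
definition dpar :: "complex \<Rightarrow> nat \<Rightarrow> complex \<Rightarrow> complex" where
  "dpar b k a = 3/4 + of_nat k/2 + a/2 - b/2"



definition uu :: "complex \<Rightarrow> complex \<Rightarrow> complex \<Rightarrow> nat \<Rightarrow> nat \<Rightarrow> complex" where
  "uu a c d N i = (if i \<le> N then (-1)^i * 4^(N-i) * pochhammer a (N+2*i)
       / (pochhammer c i * pochhammer d i * fact i * fact (N-i)) else 0)"

definition WW :: "complex \<Rightarrow> complex \<Rightarrow> complex \<Rightarrow> nat \<Rightarrow> nat \<Rightarrow> complex" where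
  "WW a c d N i = (if i = 0 \<or> Suc N < i then 0 else
      - (3 * of_nat N + 2 + a) * (-1)^i * 4^(Suc N - i) * pochhammer a (N+2*i)
       / (pochhammer c (i-1) * pochhammer d (i-1) * fact (i-1) * fact (Suc N - i)))"

lemma fr1: "(D::complex) \<noteq> 0 \<Longrightarrow> M \<noteq> 0 \<Longrightarrow> fm \<noteq> 0 \<Longrightarrow>
   X1 * (-1* sg*(4*w)*(Ar*P)/(D*(M*fm))) - X2*(-1* sg*w*P/(D*fm)) = -(sg*w*P/(D*(M*fm))) * (4*X1*Ar - M*X2)"
  by (simp add: field_simps)

lemma fr2: "(u1::complex) \<noteq> 0 \<Longrightarrow> u2 \<noteq> 0 \<Longrightarrow> u3 \<noteq> 0 \<Longrightarrow> Cj \<noteq> 0 \<Longrightarrow> Dj \<noteq> 0 \<Longrightarrow> fj \<noteq> 0 \<Longrightarrow> M \<noteq> 0 \<Longrightarrow> fm \<noteq> 0 \<Longrightarrow>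
  -T*(-1*(-1* sg))*w*(A1*(A0*P))/(u1*Cj*(u2*Dj)*(u3*fj)*fm) - -T*(-1* sg)*(4*w)*P/(Cj*Dj*fj*(M*fm))
  = -(sg*w*P/(u1*Cj*(u2*Dj)*(u3*fj)*(M*fm))) * (M*T*A0*A1 + 4*T*u1*u2*u3)"
  by (simp add: field_simps)

lemma ofnat_p1_nz: "(of_nat x + 1 :: complex) \<noteq> 0"
  by (metis of_nat_Suc of_nat_eq_0_iff nat.distinct(1) add.commute)

lemma TI_atoms:
  fixes a b c d NN RR jj mm P Cj Dj fj fm sg w :: complex
  assumes cd: "c = 3/4 + a/2 + b/2" "d = 3/4 + a/2 - b/2"
    and rel: "NN = jj + 1 + mm" "RR = NN + 2 * jj + 2"
    and nz: "Cj \<noteq> 0" "Dj \<noteq> 0" "fj \<noteq> 0" "fm \<noteq> 0" "c + jj \<noteq> 0" "d + jj \<noteq> 0" "jj + 1 \<noteq> 0" "mm + 1 \<noteq> 0"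
  shows "(NN + 1) * (c + NN) * (d + NN) * (- 1 * sg * (4 * w) * ((a + RR) * P) /
      ((c + jj) * Cj * ((d + jj) * Dj) * ((jj + 1) * fj) * ((mm + 1) * fm))) -
      (a + NN) * (1 / 2 - b + NN) * (1 / 2 + b + NN) *
      (- 1 * sg * w * P / ((c + jj) * Cj * ((d + jj) * Dj) * ((jj + 1) * fj) * fm)) =
      - (3 * NN + 2 + a) * (- 1 * (- 1 * sg)) * w * ((a + (RR + 1)) * ((a + RR) * P)) /
      ((c + jj) * Cj * ((d + jj) * Dj) * ((jj + 1) * fj) * fm) -
      - (3 * NN + 2 + a) * (- 1 * sg) * (4 * w) * P / (Cj * Dj * fj * ((mm + 1) * fm))"
proof -
  have key: "4*((NN+1)*(c+NN)*(d+NN))*(a+RR) - (mm+1)*((a+NN)*(1/2 - b + NN)*(1/2 + b + NN))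
       = (mm+1)*(3*NN+2+a)*(a+RR)*(a+(RR+1)) + 4*(3*NN+2+a)*(c+jj)*(d+jj)*(jj+1)"
    unfolding rel cd by (simp add: field_simps)
  have Dnz: "(c + jj) * Cj * ((d + jj) * Dj) * ((jj + 1) * fj) \<noteq> 0" using nz by simp
  show ?thesis
    unfolding fr1[OF Dnz nz(8) nz(4)] fr2[OF nz(5,6,7,1,2,3,8,4)] key ..
qed

lemma TI_b:
  fixes a b :: complex
  defines "c \<equiv> 3/4 + a/2 + b/2" and "d \<equiv> 3/4 + a/2 - b/2"
  assumes Cn: "\<forall>m::nat. c + of_nat m \<noteq> 0" and Dn: "\<forall>m::nat. d + of_nat m \<noteq> 0"
  assumes N: "N = Suc j + m"
  shows "(of_nat N + 1) * (c + of_nat N) * (d + of_nat N) * uu a c d (Suc N) (Suc j)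
     - (a + of_nat N) * (1/2 - b + of_nat N) * (1/2 + b + of_nat N) * uu a c d N (Suc j)
     = WW a c d N (Suc (Suc j)) - WW a c d N (Suc j)"
proof -
  define R where "R = N + 2 * Suc j"
  have n1: "Suc N - Suc j = Suc m" "N - Suc j = m" "Suc N - Suc (Suc j) = m" using N by simp_all
  have n2: "Suc N + 2 * Suc j = Suc R" "N + 2 * Suc (Suc j) = Suc (Suc R)" "N + 2 * Suc j = R"
    by (simp_all add: R_def)
  have le: "Suc j \<le> Suc N" "Suc j \<le> N" "\<not> (Suc N < Suc (Suc j))" "\<not> (Suc N < Suc j)" using N by simp_all
  have cj: "pochhammer c j \<noteq> 0" using Cn by (simp add: pochhammer_eq_0_iff) (metis add.commute neg_equal_0_iff_equal add_diff_cancel_left' diff_0 eq_neg_iff_add_eq_0)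
  have dj: "pochhammer d j \<noteq> 0" using Dn by (simp add: pochhammer_eq_0_iff) (metis add.commute neg_equal_0_iff_equal add_diff_cancel_left' diff_0 eq_neg_iff_add_eq_0)
  have c1: "c + of_nat j \<noteq> 0" "d + of_nat j \<noteq> 0" using Cn Dn by auto
  have w1: "\<not> (Suc (Suc j) = 0 \<or> Suc N < Suc (Suc j))" "\<not> (Suc j = 0 \<or> Suc N < Suc j)" using N by simp_all
  have os: "\<And>x. (of_nat (Suc x) :: complex) = of_nat x + 1" by simp
  have goal0: "(of_nat N + 1) * (c + of_nat N) * (d + of_nat N) * uu a c d (Suc N) (Suc j)
     - (a + of_nat N) * (1/2 - b + of_nat N) * (1/2 + b + of_nat N) * uu a c d N (Suc j)
     = WW a c d N (Suc (Suc j)) - WW a c d N (Suc j)"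
    unfolding uu_def WW_def n1 n2 if_P[OF le(1)] if_P[OF le(2)] if_not_P[OF w1(1)] if_not_P[OF w1(2)] diff_Suc_1
      pochhammer_rec' fact_Suc power_Suc os
    apply (rule TI_atoms)
    using cj dj c1 N by (simp_all add: c_def d_def R_def ofnat_p1_nz)
  show ?thesis by (rule goal0)
qed

lemma g0: "(u::complex) \<noteq> 0 \<Longrightarrow> fN \<noteq> 0 \<Longrightarrow>
   u*x1*x2*(4*w*(A*P)/(u*fN)) - A*y1*y2*(w*P/fN) = A*w*P/fN*(4*x1*x2 - y1*y2)"
  by (simp add: field_simps)

lemma g1: "(fN::complex) \<noteq> 0 \<Longrightarrow> A*w*P/fN*(T*(A+1)) = T*w*((A+1)*(A*P))/fN"
  by (simp add: field_simps)

lemma TI0_atoms: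
  fixes a b c d NN P fN w :: complex
  assumes cd: "c = 3/4 + a/2 + b/2" "d = 3/4 + a/2 - b/2" and nz: "fN \<noteq> 0" "NN + 1 \<noteq> 0"
  shows "(NN + 1) * (c + NN) * (d + NN) * (4 * w * ((a + NN) * P) / ((NN + 1) * fN))
     - (a + NN) * (1/2 - b + NN) * (1/2 + b + NN) * (w * P / fN)
     = (3 * NN + 2 + a) * w * ((a + NN + 1) * ((a + NN) * P)) / fN"
proof -
  have key: "4*(c+NN)*(d+NN) - (1/2-b+NN)*(1/2+b+NN) = (3*NN+2+a)*(a+NN+1)"
    unfolding cd by (simp add: field_simps)
  show ?thesis
    unfolding g0[OF nz(2,1)] key g1[OF nz(1)] ..
qed

lemma TI_0:
  fixes a b :: complex
  defines "c \<equiv> 3/4 + a/2 + b/2" and "d \<equiv> 3/4 + a/2 - b/2"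
  shows "(of_nat N + 1) * (c + of_nat N) * (d + of_nat N) * uu a c d (Suc N) 0
     - (a + of_nat N) * (1/2 - b + of_nat N) * (1/2 + b + of_nat N) * uu a c d N 0
     = WW a c d N (Suc 0) - WW a c d N 0"
proof -
  have u1: "uu a c d (Suc N) 0 = 4 * 4^N * ((a + of_nat N) * pochhammer a N) / ((of_nat N + 1) * fact N)"
    by (simp add: uu_def pochhammer_rec' fact_Suc add_ac)
  have u2: "uu a c d N 0 = 4^N * pochhammer a N / fact N"
    by (simp add: uu_def)
  have w1: "WW a c d N (Suc 0) = (3 * of_nat N + 2 + a) * 4^N * ((a + of_nat N + 1) * ((a + of_nat N) * pochhammer a N)) / fact N"
  proof -
    have p2: "pochhammer a (Suc (Suc N)) = (a + of_nat N + 1) * ((a + of_nat N) * pochhammer a N)"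
      using pochhammer_rec'[of a "Suc N"] pochhammer_rec'[of a N] by (simp add: add_ac)
    show ?thesis by (simp add: WW_def p2 algebra_simps)
  qed
  have w0: "WW a c d N 0 = 0" by (simp add: WW_def)
  show ?thesis
    unfolding u1 u2 w1 w0 diff_zero
    by (rule TI0_atoms) (simp_all add: c_def d_def ofnat_p1_nz)
qed

lemma TIN_atoms:
  fixes A T P Cn Dn fN sg u1 u2 u3 X :: complex
  assumes nz: "Cn \<noteq> 0" "Dn \<noteq> 0" "fN \<noteq> 0" "u1 \<noteq> 0" "u2 \<noteq> 0" "u3 \<noteq> 0" and AT: "A = T"
  shows "u3*u1*u2 * (sg * (A * P) / ((u1*Cn)*(u2*Dn)*(u3*fN))) - X * 0
     = 0 - (-T * sg * P / (Cn*Dn*fN))"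
  using nz unfolding AT by (simp add: field_simps)

lemma TI_N:
  fixes a b :: complex
  defines "c \<equiv> 3/4 + a/2 + b/2" and "d \<equiv> 3/4 + a/2 - b/2"
  assumes Cn: "\<forall>m::nat. c + of_nat m \<noteq> 0" and Dn: "\<forall>m::nat. d + of_nat m \<noteq> 0"
  shows "(of_nat N + 1) * (c + of_nat N) * (d + of_nat N) * uu a c d (Suc N) (Suc N)
     - (a + of_nat N) * (1/2 - b + of_nat N) * (1/2 + b + of_nat N) * uu a c d N (Suc N)
     = WW a c d N (Suc (Suc N)) - WW a c d N (Suc N)"
proof -
  have cj: "pochhammer c N \<noteq> 0" using Cn by (simp add: pochhammer_eq_0_iff) (metis add.commute eq_neg_iff_add_eq_0)
  have dj: "pochhammer d N \<noteq> 0" using Dn by (simp add: pochhammer_eq_0_iff) (metis add.commute eq_neg_iff_add_eq_0)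
  have c1: "c + of_nat N \<noteq> 0" "d + of_nat N \<noteq> 0" using Cn Dn by auto
  have e: "Suc N + 2 * Suc N = Suc (3*N+2)" "N + 2 * Suc N = 3*N+2" by simp_all
  have e2: "of_nat (3*N+2) = 3 * of_nat N + (2::complex)" by simp
  have v1: "uu a c d (Suc N) (Suc N) = (-1)^(Suc N) * ((a + (3 * of_nat N + 2)) * pochhammer a (3*N+2))
        / (((c + of_nat N) * pochhammer c N) * ((d + of_nat N) * pochhammer d N) * ((of_nat N + 1) * fact N))"
    unfolding uu_def e e2[symmetric] by (simp only: if_True le_refl diff_self_eq_0 power_0 fact_0 mult_1_right pochhammer_rec' fact_Suc of_nat_Suc add.commute)
  have v2: "uu a c d N (Suc N) = 0" by (simp add: uu_def)
  have v3: "WW a c d N (Suc (Suc N)) = 0" by (simp add: WW_def)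
  have v4: "WW a c d N (Suc N) = -(3 * of_nat N + 2 + a) * (-1)^(Suc N) * pochhammer a (3*N+2) / (pochhammer c N * pochhammer d N * fact N)"
    unfolding WW_def e by simp
  show ?thesis
    unfolding v1 v2 v3 v4 by (rule TIN_atoms) (use cj dj c1 ofnat_p1_nz[of N] in \<open>auto simp: algebra_simps\<close>)
qed

lemma TI_all:
  fixes a b :: complex
  defines "c \<equiv> 3/4 + a/2 + b/2" and "d \<equiv> 3/4 + a/2 - b/2"
  assumes Cn: "\<forall>m::nat. c + of_nat m \<noteq> 0" and Dn: "\<forall>m::nat. d + of_nat m \<noteq> 0"
  shows "(of_nat N + 1) * (c + of_nat N) * (d + of_nat N) * uu a c d (Suc N) i
     - (a + of_nat N) * (1/2 - b + of_nat N) * (1/2 + b + of_nat N) * uu a c d N i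
     = WW a c d N (Suc i) - WW a c d N i"
proof (cases i)
  case 0 thus ?thesis using TI_0[of N a b] by (simp add: c_def d_def)
next
  case (Suc j)
  show ?thesis
  proof (cases "Suc j \<le> N")
    case True
    then obtain m where "N = Suc j + m" using le_Suc_ex by blast
    thus ?thesis using TI_b[of a b N j m] Cn Dn Suc by (simp add: c_def d_def)
  next
    case False
    show ?thesis
    proof (cases "j = N")
      case True thus ?thesis using TI_N[of a b N] Cn Dn Suc by (simp add: c_def d_def)
    next
      case False
      with \<open>\<not> Suc j \<le> N\<close> have "Suc N < Suc j" by simp
      thus ?thesis using Suc by (simp add: uu_def WW_def)
    qed
  qed
qed

definition SS :: "complex \<Rightarrow> complex \<Rightarrow> complex \<Rightarrow> nat \<Rightarrow> complex" where
  "SS a c d N = (\<Sum>i<Suc N. uu a c d N i)"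

lemma SS_rec:
  fixes a b :: complex
  defines "c \<equiv> 3/4 + a/2 + b/2" and "d \<equiv> 3/4 + a/2 - b/2"
  assumes Cn: "\<forall>m::nat. c + of_nat m \<noteq> 0" and Dn: "\<forall>m::nat. d + of_nat m \<noteq> 0"
  shows "(of_nat N + 1) * (c + of_nat N) * (d + of_nat N) * SS a c d (Suc N)
     = (a + of_nat N) * (1/2 - b + of_nat N) * (1/2 + b + of_nat N) * SS a c d N"
proof -
  let ?X = "(of_nat N + 1) * (c + of_nat N) * (d + of_nat N)"
  let ?Y = "(a + of_nat N) * (1/2 - b + of_nat N) * (1/2 + b + of_nat N)"
  have "(\<Sum>i<Suc (Suc N). ?X * uu a c d (Suc N) i - ?Y * uu a c d N i)
      = (\<Sum>i<Suc (Suc N). WW a c d N (Suc i) - WW a c d N i)"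
    using TI_all[of a b N] Cn Dn unfolding c_def d_def by simp
  also have "\<dots> = WW a c d N (Suc (Suc N)) - WW a c d N 0"
    by (rule sum_lessThan_telescope)
  also have "\<dots> = 0" by (simp add: WW_def)
  finally have A: "(\<Sum>i<Suc (Suc N). ?X * uu a c d (Suc N) i - ?Y * uu a c d N i) = 0" .
  have A2: "(\<Sum>i<Suc (Suc N). ?X * uu a c d (Suc N) i - ?Y * uu a c d N i)
     = ?X * SS a c d (Suc N) - ?Y * (\<Sum>i<Suc (Suc N). uu a c d N i)"
    by (simp only: sum_subtractf sum_distrib_left[symmetric] SS_def)
  have B: "(\<Sum>i<Suc (Suc N). uu a c d N i) = SS a c d N"
    by (simp add: SS_def uu_def)
  show ?thesis using A A2 B by simp
qed

lemma g2: "(u3::complex) \<noteq> 0 \<Longrightarrow> u1 \<noteq> 0 \<Longrightarrow> u2 \<noteq> 0 \<Longrightarrow>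
  u3*u1*u2 * ((p1 * A)*(p2 * B)*(p3 * C)/((u3*F)*(u1*Cc)*(u2*Dd))) = p1 * p2 * p3 * (A*B*C/(F*Cc*Dd))"
  by (cases "F*Cc*Dd = 0") (auto simp: field_simps)

lemma SS_eq:
  fixes a b :: complex
  defines "c \<equiv> 3/4 + a/2 + b/2" and "d \<equiv> 3/4 + a/2 - b/2"
  assumes Cn: "\<forall>m::nat. c + of_nat m \<noteq> 0" and Dn: "\<forall>m::nat. d + of_nat m \<noteq> 0"
  shows "SS a c d N = tt b 0 a N"
proof (induction N)
  case 0 thus ?case by (simp add: SS_def uu_def tt_def)
next
  case (Suc N)
  let ?X = "(of_nat N + 1) * (c + of_nat N) * (d + of_nat N)"
  let ?Y = "(a + of_nat N) * (1/2 - b + of_nat N) * (1/2 + b + of_nat N)"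
  have X0: "?X \<noteq> 0" using Cn Dn ofnat_p1_nz[of N] by simp
  have t: "?X * tt b 0 a (Suc N) = ?Y * tt b 0 a N"
  proof -
    have e: "3/4 + of_nat 0/2 + a/2 + b/2 = c" "3/4 + of_nat 0/2 + a/2 - b/2 = d"
        "1/2 - of_nat 0 - b = 1/2 - b" "1/2 - of_nat 0 + b = 1/2 + b" by (simp_all add: c_def d_def)
    have cn: "pochhammer c N \<noteq> 0" "pochhammer d N \<noteq> 0" using Cn Dn
      by (simp_all add: pochhammer_eq_0_iff) (metis add.commute eq_neg_iff_add_eq_0)+
    have os: "(of_nat (Suc N) :: complex) = of_nat N + 1" by simp
    show ?thesis unfolding tt_def e pochhammer_rec' fact_Suc os
      by (rule g2) (use X0 in auto)
  qed
  have "?X * SS a c d (Suc N) = ?Y * SS a c d N" using SS_rec[of a b N] Cn Dn by (simp add: c_def d_def)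
  with t Suc.IH have "?X * SS a c d (Suc N) = ?X * tt b 0 a (Suc N)" by simp
  thus ?case using X0 by simp
qed



lemma V_power: "V s ^ n = V (of_nat n * s)"
  by (induction n) (simp_all add: V_add[symmetric] algebra_simps)

lemma Zf_power: "Zf ^ i = (-27)^i * (fps_X ^ i * V (- 3 * of_nat i))"
proof -
  have "Zf ^ i = (-27)^i * fps_X ^ i * V (-3) ^ i" by (simp only: Zf_def power_mult_distrib)
  also have "V (-3) ^ i = V (- 3 * of_nat i)" by (simp add: V_power algebra_simps)
  finally show ?thesis by (simp add: mult.assoc)
qed

lemma VZ_nth: "(V s * Zf ^ i) $ N = (if N < i then 0 else (-27)^i * V (s - 3 * of_nat i) $ (N - i))"
proof -
  have "V s * Zf ^ i = (-27)^i * (fps_X ^ i * V (s - 3 * of_nat i))"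
    unfolding Zf_power by (simp add: V_add[symmetric] algebra_simps)
  also have "(-27)^i = fps_const ((-27)^i :: complex)"
    by (simp add: numeral_fps_const fps_const_power)
  finally show ?thesis by (simp add: fps_X_power_mult_nth)
qed

lemma mult_nth_cong:
  fixes G H W :: "complex fps"
  assumes "\<forall>n\<le>N. G $ n = H $ n"
  shows "(W * G) $ N = (W * H) $ N"
  unfolding fps_mult_nth using assms by (intro sum.cong) auto

lemma comp_coeff:
  "(V s * (F oo Zf)) $ N = (\<Sum>i<Suc N. F $ i * (-27)^i * V (s - 3 * of_nat i) $ (N - i))"
proof -
  define FT where "FT = (\<Sum>i<Suc N. fps_const (F $ i) * fps_X ^ i)"
  have FT_nth: "FT $ i = (if i \<le> N then F $ i else 0)" for i
  proof -
    have "FT $ i = (\<Sum>k<Suc N. (if k = i then F $ i else 0))"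
      unfolding FT_def fps_sum_nth by (intro sum.cong) (auto simp: fps_X_power_nth)
    thus ?thesis by (simp add: sum.delta')
  qed
  have a: "\<forall>n\<le>N. (F oo Zf) $ n = (FT oo Zf) $ n"
  proof (intro allI impI)
    fix n assume "n \<le> N"
    thus "(F oo Zf) $ n = (FT oo Zf) $ n"
      unfolding fps_compose_nth using FT_nth by (intro sum.cong) auto
  qed
  have c: "FT oo Zf = (\<Sum>i<Suc N. fps_const (F $ i) * Zf ^ i)"
    unfolding FT_def fps_compose_sum_distrib
  proof (intro sum.cong refl)
    fix i
    have "fps_X ^ i oo Zf = Zf ^ i"
      by (simp add: fps_compose_power[OF Zf_0, symmetric])
    thus "fps_const (F $ i) * fps_X ^ i oo Zf = fps_const (F $ i) * Zf ^ i"
      by (simp add: fps_compose_mult_distrib[OF Zf_0])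
  qed
  have "(V s * (F oo Zf)) $ N = (V s * (FT oo Zf)) $ N"
    by (rule mult_nth_cong[OF a])
  also have "\<dots> = (\<Sum>i<Suc N. F $ i * (V s * Zf ^ i) $ N)"
    unfolding c sum_distrib_left fps_sum_nth
  proof (intro sum.cong refl)
    fix i
    have "V s * (fps_const (F $ i) * Zf ^ i) = fps_const (F $ i) * (V s * Zf ^ i)"
      by (rule mult.left_commute)
    thus "(V s * (fps_const (F $ i) * Zf ^ i)) $ N = F $ i * (V s * Zf ^ i) $ N" by (simp only: fps_mult_left_const_nth)
  qed
  also have "\<dots> = (\<Sum>i<Suc N. F $ i * (-27)^i * V (s - 3 * of_nat i) $ (N - i))"
    by (intro sum.cong) (auto simp: VZ_nth)
  finally show ?thesis .
qed

lemma poch3: "pochhammer (a/3) i * pochhammer ((a+1)/3) i * pochhammer ((a+2)/3) i * 27^i = pochhammer (a::complex) (3*i)"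
proof (induction i)
  case 0 thus ?case by simp
next
  case (Suc i)
  have s1: "pochhammer x (Suc i) = pochhammer x i * (x + of_nat i)" for x :: complex
    by (simp add: pochhammer_rec' mult.commute)
  have e: "3 * Suc i = Suc (Suc (Suc (3*i)))" by simp
  have "pochhammer (a/3) (Suc i) * pochhammer ((a+1)/3) (Suc i) * pochhammer ((a+2)/3) (Suc i) * 27^(Suc i)
     = (pochhammer (a/3) i * pochhammer ((a+1)/3) i * pochhammer ((a+2)/3) i * 27^i)
       * (27 * ((a/3 + of_nat i) * ((a+1)/3 + of_nat i) * ((a+2)/3 + of_nat i)))"
    by (simp only: s1 power_Suc mult_ac)
  also have "\<dots> = pochhammer a (3*i) * (27 * ((a/3 + of_nat i) * ((a+1)/3 + of_nat i) * ((a+2)/3 + of_nat i)))"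
    by (simp only: Suc.IH)
  also have "27 * ((a/3 + of_nat i) * ((a+1)/3 + of_nat i) * ((a+2)/3 + of_nat i))
     = (a + of_nat (3*i) + 2) * ((a + of_nat (3*i) + 1) * (a + of_nat (3*i)))"
    by (simp add: field_simps)
  also have "pochhammer a (3*i) * ((a + of_nat (3*i) + 2) * ((a + of_nat (3*i) + 1) * (a + of_nat (3*i)))) = pochhammer a (3 * Suc i)"
    unfolding e pochhammer_rec' by (simp add: algebra_simps)
  finally show ?case .
qed

lemma g3: "T3 * K = P3 \<Longrightarrow> P3 * Pm = Pf \<Longrightarrow> (C::complex) \<noteq> 0 \<Longrightarrow> D \<noteq> 0 \<Longrightarrow> f \<noteq> 0 \<Longrightarrow> fm \<noteq> 0 \<Longrightarrow>
   T3 / (C * D * f) * (sg * K) * (w * Pm / fm) = sg * w * Pf / (C * D * f * fm)"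
  by (auto simp: field_simps)

lemma bailey_term:
  fixes a c d :: complex
  assumes Cn: "\<forall>m::nat. c + of_nat m \<noteq> 0" and Dn: "\<forall>m::nat. d + of_nat m \<noteq> 0" and iN: "i \<le> N"
  shows "FA c d a $ i * (-27)^i * V (-a - 3 * of_nat i) $ (N - i) = uu a c d N i"
proof -
  have cn: "pochhammer c i \<noteq> 0" "pochhammer d i \<noteq> 0" using Cn Dn
    by (simp_all add: pochhammer_eq_0_iff) (metis add.commute eq_neg_iff_add_eq_0)+
  have m27: "(-27::complex)^i = (-1)^i * 27^i" by (simp flip: power_mult_distrib)
  have Vn: "V (-a - 3 * of_nat i) $ (N - i) = 4^(N-i) * pochhammer (a + 3 * of_nat i) (N-i) / fact (N-i)"
  proof -
    have "V (-a - 3 * of_nat i) $ (N - i) = (-4)^(N-i) * ((-1)^(N-i) * pochhammer (a + 3 * of_nat i) (N-i) / fact (N-i))"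
      by (simp add: V_nth gbinomial_pochhammer add_ac)
    also have "(-4::complex)^(N-i) * ((-1)^(N-i) * pochhammer (a + 3 * of_nat i) (N-i) / fact (N-i))
       = ((-4) * (-1))^(N-i) * pochhammer (a + 3 * of_nat i) (N-i) / fact (N-i)"
      by (simp only: power_mult_distrib mult.assoc times_divide_eq_right)
    finally show ?thesis by simp
  qed
  have pp: "pochhammer a (3*i) * pochhammer (a + 3 * of_nat i) (N-i) = pochhammer a (N + 2*i)"
  proof -
    have "pochhammer a (3*i + (N-i)) = pochhammer a (3*i) * pochhammer (a + of_nat (3*i)) (N-i)"
      by (rule pochhammer_product')
    moreover have "3*i + (N-i) = N + 2*i" using iN by simp
    ultimately show ?thesis by simp
  qed
  show ?thesis
    unfolding FA_def HF_def fps_nth_Abs_fps m27 Vn uu_def if_P[OF iN]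
    by (rule g3[OF poch3 pp cn]) simp_all
qed

lemma bailey_proof:
  assumes "\<forall>m::nat. cpar b 0 a + of_nat m \<noteq> 0" "\<forall>m::nat. dpar b 0 a + of_nat m \<noteq> 0"
  shows "Abs_fps (tt b 0 a) = V (-a) * (FA (cpar b 0 a) (dpar b 0 a) a oo Zf)"
proof -
  have cd: "cpar b 0 a = 3/4 + a/2 + b/2" "dpar b 0 a = 3/4 + a/2 - b/2"
    by (simp_all add: cpar_def dpar_def)
  have Cn: "\<forall>m::nat. (3/4 + a/2 + b/2) + of_nat m \<noteq> 0" and Dn: "\<forall>m::nat. (3/4 + a/2 - b/2) + of_nat m \<noteq> 0"
    using assms unfolding cd by auto
  show ?thesis
  proof (rule fps_ext)
    fix N
    have "(V (-a) * (FA (cpar b 0 a) (dpar b 0 a) a oo Zf)) $ N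
      = (\<Sum>i<Suc N. FA (cpar b 0 a) (dpar b 0 a) a $ i * (-27)^i * V (-a - 3 * of_nat i) $ (N - i))"
      by (rule comp_coeff)
    also have "\<dots> = (\<Sum>i<Suc N. uu a (3/4 + a/2 + b/2) (3/4 + a/2 - b/2) N i)"
      unfolding cd by (intro sum.cong refl bailey_term[OF Cn Dn]) simp
    also have "\<dots> = tt b 0 a N"
      using SS_eq[OF Cn Dn, of N] unfolding SS_def .
    finally show "Abs_fps (tt b 0 a) $ N = (V (-a) * (FA (cpar b 0 a) (dpar b 0 a) a oo Zf)) $ N" by simp
  qed
qed

lemma bailey:
  assumes "\<forall>m::nat. a + of_nat m \<noteq> 0" "\<forall>m::nat. cpar b 0 a + of_nat m \<noteq> 0" "\<forall>m::nat. dpar b 0 a + of_nat m \<noteq> 0"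
  shows "Abs_fps (tt b 0 a) = V (-a) * (FA (cpar b 0 a) (dpar b 0 a) a oo Zf)"
  using assms(2,3) by (rule bailey_proof)

lemma formal:
  assumes bg: "\<forall>j::nat. b \<noteq> of_nat j + 1/2 \<and> b \<noteq> - (of_nat j + 1/2)"
  shows "\<forall>a. (\<forall>m::nat. a + of_nat m \<noteq> 0) \<and> (\<forall>m::nat. cpar b k a + of_nat m \<noteq> 0) \<and> (\<forall>m::nat. dpar b k a + of_nat m \<noteq> 0)
     \<longrightarrow> Gk b k a = (1 + 8 * fps_X)^(2*k+1) * V (-(1 + 2 * of_nat k + a)) * (FA (cpar b k a) (dpar b k a) (1 + 2 * of_nat k + a) oo Zf)"
proof (induction k)
  case 0
  show ?case
  proof (intro allI impI)
    fix a assume as: "(\<forall>m::nat. a + of_nat m \<noteq> 0) \<and> (\<forall>m::nat. cpar b 0 a + of_nat m \<noteq> 0) \<and> (\<forall>m::nat. dpar b 0 a + of_nat m \<noteq> 0)"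
    have a0: "a \<noteq> 0" using as by (metis add.right_neutral of_nat_0)
    define H where "H = Abs_fps (tt b 0 a)"
    have HB: "H = V (-a) * (FA (cpar b 0 a) (dpar b 0 a) a oo Zf)"
      unfolding H_def using as by (intro bailey) auto
    have G0: "Gk b 0 a = H + fps_const (3/a) * fps_X * fps_deriv H"
    proof -
      have "Gk b 0 a $ n = (H + fps_const (3/a) * fps_X * fps_deriv H) $ n" for n
      proof -
        have "(fps_const (3/a) * fps_X * fps_deriv H) $ n = 3/a * (of_nat n * H $ n)"
          using theta_nth[of H n] by (simp add: mult.assoc)
        thus ?thesis by (simp add: Gk_def H_def algebra_simps)
      qed
      thus ?thesis by (simp add: fps_eq_iff)
    qed
    have "fps_const a * Gk b 0 a = 3 * fps_X * fps_deriv H + fps_const a * H"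
      unfolding G0 using a0 by (simp add: algebra_simps numeral_fps_const flip: fps_const_mult)
    also have "\<dots> = fps_const a * (1 + 8 * fps_X) * V (-a-1) * ((FA (cpar b 0 a) (dpar b 0 a) a + fps_const (3/a) * fps_X * fps_deriv (FA (cpar b 0 a) (dpar b 0 a) a)) oo Zf)"
      unfolding HB core[OF a0] by (simp add: mult.assoc)
    also have "\<dots> = fps_const a * ((1 + 8 * fps_X)^(2*0+1) * V (-(1 + 2 * of_nat 0 + a)) * (FA (cpar b 0 a) (dpar b 0 a) (1 + 2 * of_nat 0 + a) oo Zf))"
    proof -
      have va: "V (-a-1) = V (-(1 + 2 * of_nat 0 + a))" by (rule arg_cong[of _ _ V]) simp
      show ?thesis unfolding FA_contig[OF a0, symmetric] va by (simp add: algebra_simps)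
    qed
    finally show "Gk b 0 a = (1 + 8 * fps_X)^(2*0+1) * V (-(1 + 2 * of_nat 0 + a)) * (FA (cpar b 0 a) (dpar b 0 a) (1 + 2 * of_nat 0 + a) oo Zf)"
      using a0 by simp
  qed
next
  case (Suc k)
  show ?case
  proof (intro allI impI)
    fix a assume as: "(\<forall>m::nat. a + of_nat m \<noteq> 0) \<and> (\<forall>m::nat. cpar b (Suc k) a + of_nat m \<noteq> 0) \<and> (\<forall>m::nat. dpar b (Suc k) a + of_nat m \<noteq> 0)"
    have cp: "cpar b k (a+1) = cpar b (Suc k) a" "dpar b k (a+1) = dpar b (Suc k) a"
      by (simp_all add: cpar_def dpar_def field_simps)
    have as': "(\<forall>m::nat. (a+1) + of_nat m \<noteq> 0) \<and> (\<forall>m::nat. cpar b k (a+1) + of_nat m \<noteq> 0) \<and> (\<forall>m::nat. dpar b k (a+1) + of_nat m \<noteq> 0)"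
    proof (intro conjI allI)
      fix m :: nat
      show "(a+1) + of_nat m \<noteq> 0" using as[THEN conjunct1, rule_format, of "Suc m"] by (simp add: add_ac)
    qed (use as cp in auto)
    define Bn where "Bn = 2 * of_nat (Suc k) + a"
    have Bn0: "Bn \<noteq> 0" using as[THEN conjunct1, rule_format, of "2 * Suc k"] by (simp add: Bn_def add_ac)
    have a0: "a \<noteq> 0" using as by (metis add.right_neutral of_nat_0)
    have p0: "1/2 - of_nat (Suc k) - b \<noteq> 0"
    proof
      assume "1/2 - of_nat (Suc k) - b = 0"
      hence "b = - (of_nat k + 1/2)" by (simp add: algebra_simps)
      thus False using bg by blast
    qed
    have q0: "1/2 - of_nat (Suc k) + b \<noteq> 0"
    proof
      assume "1/2 - of_nat (Suc k) + b = 0"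
      hence "b = of_nat k + 1/2" by (simp add: algebra_simps)
      thus False using bg by blast
    qed
    have cc: "\<forall>m::nat. 3/4 + of_nat (Suc k)/2 + a/2 + b/2 + of_nat m \<noteq> 0"
      using as by (simp add: cpar_def)
    have dd: "\<forall>m::nat. 3/4 + of_nat (Suc k)/2 + a/2 - b/2 + of_nat m \<noteq> 0"
      using as by (simp add: dpar_def)
    have e1: "1 + 2 * of_nat k + (a + 1) = Bn" by (simp add: Bn_def algebra_simps)
    define Y where "Y = V (-Bn) * (FA (cpar b (Suc k) a) (dpar b (Suc k) a) Bn oo Zf)"
    have IH: "Gk b k (a+1) = (1 + 8 * fps_X)^(2*k+1) * Y"
    proof -
      have IH0: "Gk b k (a+1) = (1 + 8 * fps_X)^(2*k+1) * V (-(1 + 2 * of_nat k + (a+1))) * (FA (cpar b k (a+1)) (dpar b k (a+1)) (1 + 2 * of_nat k + (a+1)) oo Zf)"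
        using Suc.IH as' by blast
      show ?thesis using IH0 unfolding e1 cp Y_def by (simp only: mult.assoc)
    qed
    have e2: "Bn - 3 * (2 * of_nat k + 1) = Bn - 3 * of_nat (2*k+1)" by simp
    have "fps_const Bn * Gk b (Suc k) a
       = (1 + 8 * fps_X)^(2*k+1) * (1 + 8 * fps_X) * (3 * fps_X * fps_deriv Y + fps_const Bn * Y)"
      unfolding Gk_rec[OF a0 p0 q0 Bn0[unfolded Bn_def] cc dd, folded Bn_def] IH e2 by (rule Epow)
    also have "3 * fps_X * fps_deriv Y + fps_const Bn * Y
       = fps_const Bn * (1 + 8 * fps_X) * V (-Bn-1) * ((FA (cpar b (Suc k) a) (dpar b (Suc k) a) Bn + fps_const (3/Bn) * fps_X * fps_deriv (FA (cpar b (Suc k) a) (dpar b (Suc k) a) Bn)) oo Zf)"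
      unfolding Y_def core[OF Bn0] by (simp add: mult.assoc)
    also have "-Bn-1 = -(1 + 2 * of_nat (Suc k) + a)" by (simp add: Bn_def)
    also have "FA (cpar b (Suc k) a) (dpar b (Suc k) a) Bn + fps_const (3/Bn) * fps_X * fps_deriv (FA (cpar b (Suc k) a) (dpar b (Suc k) a) Bn)
       = FA (cpar b (Suc k) a) (dpar b (Suc k) a) (1 + 2 * of_nat (Suc k) + a)"
      using FA_contig[OF Bn0] by (simp add: Bn_def add_ac)
    finally have "fps_const Bn * Gk b (Suc k) a = fps_const Bn * ((1 + 8 * fps_X)^(2*Suc k+1) * V (-(1 + 2 * of_nat (Suc k) + a)) * (FA (cpar b (Suc k) a) (dpar b (Suc k) a) (1 + 2 * of_nat (Suc k) + a) oo Zf))"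
      by (simp add: algebra_simps)
    thus "Gk b (Suc k) a = (1 + 8 * fps_X)^(2*Suc k+1) * V (-(1 + 2 * of_nat (Suc k) + a)) * (FA (cpar b (Suc k) a) (dpar b (Suc k) a) (1 + 2 * of_nat (Suc k) + a) oo Zf)"
      using Bn0 by simp
  qed
qed



lemma V_expansion: "(\<lambda>x. (1 - 4 * x) powr s) has_fps_expansion V s"
proof -
  have g: "(\<lambda>x::complex. -4 * x) has_fps_expansion fps_const (-4) * fps_X"
    using has_fps_expansion_cmult_left[OF has_fps_expansion_fps_X, of "-4::complex"] by simp
  have "((\<lambda>x. (1 + x) powr s) \<circ> (\<lambda>x::complex. -4 * x)) has_fps_expansion fps_compose (fps_binomial s) (fps_const (-4) * fps_X)"
    by (rule has_fps_expansion_compose[OF has_fps_expansion_binomial_complex g]) simp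
  moreover have "((\<lambda>x. (1 + x) powr s) \<circ> (\<lambda>x::complex. -4 * x)) = (\<lambda>x. (1 - 4 * x) powr s)"
    by (simp add: o_def)
  ultimately show ?thesis by (simp add: V_def)
qed

lemma zf_eq: "-27 * x / (1 - 4 * x)^3 = -27 * x * (1 - 4 * x) powr (-3 :: complex)"
proof -
  have "(1 - 4 * x) powr (-3 :: complex) = inverse ((1 - 4 * x) powr (of_nat 3))"
    by (simp add: powr_minus)
  also have "(1 - 4 * x) powr (of_nat 3) = (1 - 4 * x)^3"
    by (rule powr_nat') simp
  finally show ?thesis by (simp add: divide_inverse)
qed

lemma Zf_expansion: "(\<lambda>x::complex. -27 * x / (1 - 4 * x)^3) has_fps_expansion Zf"
proof -
  have "(\<lambda>x::complex. -27 * x * (1 - 4 * x) powr (-3)) has_fps_expansion fps_const (-27) * fps_X * V (-3)"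
    by (intro has_fps_expansion_mult has_fps_expansion_cmult_left has_fps_expansion_fps_X V_expansion)
  moreover have "fps_const (-27) * fps_X * V (-3) = Zf"
    by (simp add: Zf_def numeral_fps_const)
  moreover have eqf: "(\<lambda>x::complex. -27 * x / (1 - 4 * x)^3) = (\<lambda>x. -27 * x * (1 - 4 * x) powr (-3))"
    by (rule ext, rule zf_eq)
  ultimately show ?thesis unfolding eqf by simp
qed

lemma dd_cancel: "(c::complex) \<noteq> 0 \<Longrightarrow> (a/c)/(b/c) = a/b"
  by (cases "b = 0") (simp_all add: field_simps)

lemma ratio1: "(\<lambda>n. (x + of_nat n) / (y + of_nat n)) \<longlonglongrightarrow> (1::complex)"
proof -
  have "(\<lambda>n. (x * (1 / of_nat n) + 1) / (y * (1 / of_nat n) + 1)) \<longlonglongrightarrow> (x * 0 + 1) / (y * 0 + (1::complex))"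
    by (intro tendsto_intros) simp_all
  hence lim: "(\<lambda>n. (x * (1 / of_nat n) + 1) / (y * (1 / of_nat n) + 1)) \<longlonglongrightarrow> (1::complex)" by simp
  have ev: "eventually (\<lambda>n. (x * (1 / of_nat n) + 1) / (y * (1 / of_nat n) + 1) = (x + of_nat n) / (y + of_nat n)) sequentially"
    using eventually_gt_at_top[of "0::nat"]
  proof (rule eventually_mono)
    fix n :: nat assume "n > 0"
    hence nz: "(of_nat n :: complex) \<noteq> 0" by simp
    show "(x * (1 / of_nat n) + 1) / (y * (1 / of_nat n) + 1) = (x + of_nat n) / (y + of_nat n)"
    proof (cases "y + of_nat n = 0")
      case True
      hence "y * (1 / of_nat n) + 1 = 0" using nz by (simp add: field_simps)
      thus ?thesis using True by simp
    next
      case False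
      have e1: "x * (1 / of_nat n) + 1 = (x + of_nat n) / of_nat n" using nz by (simp add: field_simps)
      have e2: "y * (1 / of_nat n) + 1 = (y + of_nat n) / of_nat n" using nz by (simp add: field_simps)
      show ?thesis unfolding e1 e2 using nz by (rule dd_cancel)
    qed
  qed
  show ?thesis by (rule Lim_transform_eventually[OF lim ev])
qed

lemma HF_radius:
  fixes u1 u2 u3 v1 v2 :: complex
  assumes nz: "\<forall>m::nat. u1 + of_nat m \<noteq> 0" "\<forall>m::nat. u2 + of_nat m \<noteq> 0" "\<forall>m::nat. u3 + of_nat m \<noteq> 0"
     "\<forall>m::nat. v1 + of_nat m \<noteq> 0" "\<forall>m::nat. v2 + of_nat m \<noteq> 0"
  shows "fps_conv_radius (HF u1 u2 u3 v1 v2) > 0"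
proof -
  define f where "f = fps_nth (HF u1 u2 u3 v1 v2)"
  have pn: "pochhammer x n \<noteq> 0" if "\<forall>m::nat. x + of_nat m \<noteq> 0" for x :: complex and n
    using that by (simp add: pochhammer_eq_0_iff) (metis add.commute eq_neg_iff_add_eq_0)
  have fn: "f n \<noteq> 0" for n
    using pn[OF nz(1)] pn[OF nz(2)] pn[OF nz(3)] pn[OF nz(4)] pn[OF nz(5)]
    by (simp add: f_def HF_def)
  have rat: "norm (f n) / norm (f (Suc n)) = norm ((v1 + of_nat n) / (u1 + of_nat n) * ((v2 + of_nat n) / (u2 + of_nat n)) * ((1 + of_nat n) / (u3 + of_nat n)))" for n
  proof -
    define R where "R = (u1 + of_nat n) * (u2 + of_nat n) * (u3 + of_nat n) / ((v1 + of_nat n) * (v2 + of_nat n) * (1 + of_nat n))"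
    have nzn: "u1 + of_nat n \<noteq> 0" "u2 + of_nat n \<noteq> 0" "u3 + of_nat n \<noteq> 0" "v1 + of_nat n \<noteq> 0" "v2 + of_nat n \<noteq> 0" "1 + of_nat n \<noteq> (0::complex)"
      using nz ofnat_p1_nz[of n] by (auto simp: add.commute)
    have fS: "f (Suc n) = f n * R"
      unfolding f_def HF_def fps_nth_Abs_fps pochhammer_rec' fact_Suc R_def
      using nz by (simp add: field_simps)
    have "norm (f n) / norm (f (Suc n)) = 1 / norm R" using fn[of n] by (simp add: fS norm_mult)
    also have "\<dots> = norm (1 / R)" by (simp add: norm_divide)
    also have "1 / R = (v1 + of_nat n) / (u1 + of_nat n) * ((v2 + of_nat n) / (u2 + of_nat n)) * ((1 + of_nat n) / (u3 + of_nat n))"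
      unfolding R_def using nzn by (simp add: field_simps)
    finally show ?thesis .
  qed
  have "(\<lambda>n. norm ((v1 + of_nat n) / (u1 + of_nat n) * ((v2 + of_nat n) / (u2 + of_nat n)) * ((1 + of_nat n) / (u3 + of_nat n)))) \<longlonglongrightarrow> norm ((1::complex) * 1 * 1)"
    by (intro tendsto_norm tendsto_mult ratio1)
  hence "(\<lambda>n. norm (f n) / norm (f (Suc n))) \<longlonglongrightarrow> 1" unfolding rat by simp
  hence "conv_radius f = ereal 1"
    by (intro conv_radius_ratio_limit_nonzero[of _ 1]) simp_all
  thus ?thesis by (simp add: fps_conv_radius_def f_def)
qed

lemma analytic_part:
  fixes F Gk :: "complex fps" and A :: complex and j :: nat
  assumes Frad: "fps_conv_radius F > 0"
    and Gid: "Gk = (1 + 8 * fps_X)^j * V (-A) * (F oo Zf)"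
  shows "\<exists>r>0. \<forall>x::complex. norm x < r \<longrightarrow> summable (\<lambda>n. Gk $ n * x ^ n) \<and>
     eval_fps F (-27 * x / (1 - 4 * x)^3) = inverse ((1 + 8 * x)^j) * (1 - 4 * x) powr A * suminf (\<lambda>n. Gk $ n * x ^ n)"
proof -
  have LE: "(eval_fps F \<circ> (\<lambda>x::complex. -27 * x / (1 - 4 * x)^3)) has_fps_expansion (F oo Zf)"
    by (rule has_fps_expansion_compose[OF eval_fps_has_fps_expansion[OF Frad] Zf_expansion Zf_0])
  have PE: "(\<lambda>x::complex. (1 + 8 * x)^j) has_fps_expansion (1 + 8 * fps_X)^j"
  proof -
    have "(\<lambda>x::complex. 1 + 8 * x) has_fps_expansion 1 + fps_const 8 * fps_X"
      by (intro has_fps_expansion_add has_fps_expansion_cmult_left has_fps_expansion_fps_X has_fps_expansion_1)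
    hence "(\<lambda>x::complex. (1 + 8 * x)^j) has_fps_expansion (1 + fps_const 8 * fps_X)^j"
      by (rule has_fps_expansion_power)
    thus ?thesis by (simp add: numeral_fps_const)
  qed
  have GE: "(\<lambda>x. (1 + 8 * x)^j * (1 - 4 * x) powr (-A) * (eval_fps F \<circ> (\<lambda>x::complex. -27 * x / (1 - 4 * x)^3)) x) has_fps_expansion Gk"
    unfolding Gid by (intro has_fps_expansion_mult PE V_expansion LE)
  hence Grad: "fps_conv_radius Gk > 0" and Gev: "eventually (\<lambda>x. eval_fps Gk x = (1 + 8 * x)^j * (1 - 4 * x) powr (-A) * eval_fps F (-27 * x / (1 - 4 * x)^3)) (nhds 0)"
    by (auto simp: has_fps_expansion_def)
  have ev2: "eventually (\<lambda>x::complex. x \<in> eball 0 (fps_conv_radius Gk)) (nhds 0)"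
    using Grad by (intro eventually_nhds_in_open) (auto simp: zero_ereal_def)
  have ev3: "eventually (\<lambda>x::complex. x \<in> ball 0 (1/8)) (nhds 0)"
    by (intro eventually_nhds_in_open) auto
  have "eventually (\<lambda>x. summable (\<lambda>n. Gk $ n * x ^ n) \<and>
     eval_fps F (-27 * x / (1 - 4 * x)^3) = inverse ((1 + 8 * x)^j) * (1 - 4 * x) powr A * suminf (\<lambda>n. Gk $ n * x ^ n)) (nhds 0)"
    using Gev ev2 ev3
  proof eventually_elim
    case (elim x)
    have nx: "norm x < fps_conv_radius Gk" using elim(2) by simp
    have sm: "(\<lambda>n. Gk $ n * x ^ n) sums eval_fps Gk x" by (rule sums_eval_fps[OF nx])
    have x8: "norm x < 1/8" using elim(3) by simp
    have n1: "1 + 8 * x \<noteq> 0"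
    proof
      assume H: "1 + 8 * x = 0"
      have "x = ((1 + 8 * x) - 1) / 8" by simp
      hence "x = -1/8" using H by simp
      thus False using x8 by simp
    qed
    have n2: "1 - 4 * x \<noteq> 0"
    proof
      assume H: "1 - 4 * x = 0"
      have "x = (1 - (1 - 4 * x)) / 4" by simp
      hence "x = 1/4" using H by simp
      hence "norm x = norm (1/4 :: complex)" by (rule arg_cong)
      hence "norm x = 1/4" by (simp add: norm_divide)
      thus False using x8 by simp
    qed
    have pw: "(1 - 4 * x) powr A * (1 - 4 * x) powr (-A) = 1"
      using n2 by (simp add: powr_add[symmetric])
    have "inverse ((1 + 8 * x)^j) * (1 - 4 * x) powr A * suminf (\<lambda>n. Gk $ n * x ^ n)
        = inverse ((1 + 8 * x)^j) * (1 - 4 * x) powr A * ((1 + 8 * x)^j * (1 - 4 * x) powr (-A) * eval_fps F (-27 * x / (1 - 4 * x)^3))"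
      using sm elim(1) by (simp add: sums_iff)
    also have "\<dots> = eval_fps F (-27 * x / (1 - 4 * x)^3) * (inverse ((1 + 8 * x)^j) * (1 + 8 * x)^j) * ((1 - 4 * x) powr A * (1 - 4 * x) powr (-A))"
      by (simp add: algebra_simps)
    also have "\<dots> = eval_fps F (-27 * x / (1 - 4 * x)^3)"
      using n1 pw by simp
    finally show ?case using sm by (auto simp: sums_iff)
  qed
  then obtain r where "r > 0" "\<forall>x. dist x 0 < r \<longrightarrow> summable (\<lambda>n. Gk $ n * x ^ n) \<and>
     eval_fps F (-27 * x / (1 - 4 * x)^3) = inverse ((1 + 8 * x)^j) * (1 - 4 * x) powr A * suminf (\<lambda>n. Gk $ n * x ^ n)"
    unfolding eventually_nhds_metric by blast
  thus ?thesis by (intro exI[of _ r]) auto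
qed



primrec Qp :: "nat \<Rightarrow> complex \<Rightarrow> complex \<Rightarrow> complex poly" where
  "Qp 0 a b = [:1, 3/a:]"
| "Qp (Suc k) a b = smult (1 / (a * (1/2 - of_nat (Suc k) - b) * (1/2 - of_nat (Suc k) + b)))
     (smult (1 / (2 * of_nat (Suc k) + a))
        ([:2 * of_nat (Suc k) + a, 3:] * [:a, 1:] * [:1/2 - of_nat (Suc k) - b, 1:] * [:1/2 - of_nat (Suc k) + b, 1:]) * Qp k (a+1) b
    + smult (8 / (2 * of_nat (Suc k) + a))
        ([:a - 4 * of_nat (Suc k), 3:] * [:0, 1:] * [:-1/4 + of_nat (Suc k)/2 + a/2 + b/2, 1:] * [:-1/4 + of_nat (Suc k)/2 + a/2 - b/2, 1:])
        * pcompose (Qp k (a+1) b) [:-1, 1:])"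

lemma Qp_gen: "1 / D * (1 / B * (x1*x2*x3*x4) * Q + 8 / B * (y1*y2*y3*y4) * R)
   = (x1 / B * x2 * x3 * x4 * Q + 8 * y1 / B * y2 * y3 * y4 * R) / (D::complex)"
  by (simp add: divide_inverse algebra_simps)

lemma Qp_poly: "poly (Qp k a b) n = Q3 k n a b"
proof (induction k arbitrary: a n)
  case 0 thus ?case by (simp add: divide_inverse algebra_simps)
next
  case (Suc k)
  define K :: complex where "K = of_nat (Suc k)"
  have l: "poly [:2 * K + a, 3:] n = 3 * n + 2 * K + a" "poly [:a, 1:] n = n + a"
     "poly [:1/2 - K - b, 1:] n = n + 1/2 - K - b" "poly [:1/2 - K + b, 1:] n = n + 1/2 - K + b"
     "poly [:a - 4 * K, 3:] n = 3 * n - 4 * K + a" "poly [:0, 1:] n = n"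
     "poly [:-1/4 + K/2 + a/2 + b/2, 1:] n = n - 1/4 + K/2 + a/2 + b/2"
     "poly [:-1/4 + K/2 + a/2 - b/2, 1:] n = n - 1/4 + K/2 + a/2 - b/2"
    by (simp_all add: algebra_simps)
  have pc: "poly (pcompose (Qp k (a+1) b) [:-1, 1:]) n = Q3 k (n - 1) (a+1) b"
    by (simp add: poly_pcompose Suc.IH)
  have "poly (Qp (Suc k) a b) n = 1 / (a * (1/2 - K - b) * (1/2 - K + b)) *
     (1 / (2 * K + a) * ((3 * n + 2 * K + a) * (n + a) * (n + 1/2 - K - b) * (n + 1/2 - K + b)) * Q3 k n (a+1) b
      + 8 / (2 * K + a) * ((3 * n - 4 * K + a) * n * (n - 1/4 + K/2 + a/2 + b/2) * (n - 1/4 + K/2 + a/2 - b/2)) * Q3 k (n - 1) (a+1) b)"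
    unfolding Qp.simps(2) K_def[symmetric] by (simp only: poly_smult poly_mult poly_add l pc Suc.IH)
  also have "\<dots> = Q3 (Suc k) n a b"
    unfolding Qp_gen Q3.simps(2) K_def[symmetric] ..
  finally show ?case .
qed

lemma lin_prod:
  fixes c0 c1 d0 d1 e0 e1 f0 f1 :: complex
  assumes "c1 \<noteq> 0" "d1 \<noteq> 0" "e1 \<noteq> 0" "f1 \<noteq> 0"
  shows "degree ([:c0,c1:]*[:d0,d1:]*[:e0,e1:]*[:f0,f1:]) = 4 \<and> lead_coeff ([:c0,c1:]*[:d0,d1:]*[:e0,e1:]*[:f0,f1:]) = c1*d1*e1*f1"
  using assms by (simp add: degree_mult_eq lead_coeff_mult)

lemma deg_sum:
  fixes P1 P2 Q1 Q2 :: "complex poly" and s1 s2 :: complex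
  assumes "degree P1 = 4" "degree P2 = 4" "degree Q1 = D" "degree Q2 = D" "Q1 \<noteq> 0" "Q2 \<noteq> 0" "P1 \<noteq> 0" "P2 \<noteq> 0"
    and "s1 * lead_coeff P1 * lead_coeff Q1 + s2 * lead_coeff P2 * lead_coeff Q2 \<noteq> 0"
  shows "degree (smult s1 P1 * Q1 + smult s2 P2 * Q2) = D + 4"
proof (rule antisym)
  show "degree (smult s1 P1 * Q1 + smult s2 P2 * Q2) \<le> D + 4"
    by (intro degree_add_le order.trans[OF degree_mult_le]) (use assms in simp_all)
  have "coeff (smult s1 P1 * Q1 + smult s2 P2 * Q2) (D + 4) = s1 * lead_coeff P1 * lead_coeff Q1 + s2 * lead_coeff P2 * lead_coeff Q2"
  proof -
    have c1: "coeff (P1 * Q1) (D + 4) = lead_coeff P1 * lead_coeff Q1"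
      using coeff_mult_degree_sum[of P1 Q1] assms(1,3) by (simp add: add.commute)
    have c2: "coeff (P2 * Q2) (D + 4) = lead_coeff P2 * lead_coeff Q2"
      using coeff_mult_degree_sum[of P2 Q2] assms(2,4) by (simp add: add.commute)
    show ?thesis by (simp only: coeff_add coeff_smult mult_smult_left c1 c2 mult.assoc)
  qed
  thus "D + 4 \<le> degree (smult s1 P1 * Q1 + smult s2 P2 * Q2)"
    using assms(9) by (intro le_degree) simp
qed

lemma Qp_degree:
  assumes bg: "\<forall>j::nat. b \<noteq> of_nat j + 1/2 \<and> b \<noteq> - (of_nat j + 1/2)"
  shows "\<forall>a. (\<forall>m::nat. a + of_nat m \<noteq> 0) \<longrightarrow> degree (Qp k a b) = 1 + 4 * k"
proof (induction k)
  case 0 show ?case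
  proof (intro allI impI)
    fix a :: complex assume "\<forall>m::nat. a + of_nat m \<noteq> 0"
    hence "a \<noteq> 0" by (metis add.right_neutral of_nat_0)
    thus "degree (Qp 0 a b) = 1 + 4 * 0" by simp
  qed
next
  case (Suc k)
  show ?case
  proof (intro allI impI)
    fix a :: complex assume ag: "\<forall>m::nat. a + of_nat m \<noteq> 0"
    have a0: "a \<noteq> 0" using ag by (metis add.right_neutral of_nat_0)
    have ag1: "\<forall>m::nat. (a+1) + of_nat m \<noteq> 0" using ag by (metis add.assoc of_nat_Suc add.commute)
    have B0: "2 * of_nat (Suc k) + a \<noteq> 0" using ag[rule_format, of "2 * Suc k"] by (simp add: add_ac)
    have p0: "1/2 - of_nat (Suc k) - b \<noteq> 0"
    proof
      assume "1/2 - of_nat (Suc k) - b = 0"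
      hence "b = - (of_nat k + 1/2)" by (simp add: algebra_simps)
      thus False using bg by blast
    qed
    have q0: "1/2 - of_nat (Suc k) + b \<noteq> 0"
    proof
      assume "1/2 - of_nat (Suc k) + b = 0"
      hence "b = of_nat k + 1/2" by (simp add: algebra_simps)
      thus False using bg by blast
    qed
    define Q where "Q = Qp k (a+1) b"
    have dQ: "degree Q = 1 + 4 * k" using Suc.IH ag1 by (simp add: Q_def)
    hence Q0: "Q \<noteq> 0" by auto
    define Qc where "Qc = pcompose Q [:-1, 1:]"
    have dQc: "degree Qc = 1 + 4 * k" by (simp add: Qc_def degree_pcompose dQ)
    hence Qc0: "Qc \<noteq> 0" by auto
    have lQc: "lead_coeff Qc = lead_coeff Q" by (simp add: Qc_def lead_coeff_comp dQ)
    define P1 where "P1 = [:2 * of_nat (Suc k) + a, 3:] * [:a, 1:] * [:1/2 - of_nat (Suc k) - b, 1:] * [:1/2 - of_nat (Suc k) + b, 1:]"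
    define P2 where "P2 = [:a - 4 * of_nat (Suc k), 3:] * [:0, 1:] * [:-1/4 + of_nat (Suc k)/2 + a/2 + b/2, 1:] * [:-1/4 + of_nat (Suc k)/2 + a/2 - b/2, 1:]"
    have P1d: "degree P1 = 4" and P1l: "lead_coeff P1 = 3" unfolding P1_def using lin_prod[of 3 1 1 1] by auto
    have P2d: "degree P2 = 4" and P2l: "lead_coeff P2 = 3" unfolding P2_def using lin_prod[of 3 1 1 1] by auto
    have LQ: "lead_coeff Q \<noteq> 0" using Q0 by simp
    have ne: "1 / (2 * of_nat (Suc k) + a) * lead_coeff P1 * lead_coeff Q + 8 / (2 * of_nat (Suc k) + a) * lead_coeff P2 * lead_coeff Qc \<noteq> 0"
    proof -
      have "1 / (2 * of_nat (Suc k) + a) * lead_coeff P1 * lead_coeff Q + 8 / (2 * of_nat (Suc k) + a) * lead_coeff P2 * lead_coeff Qc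
         = 27 * lead_coeff Q / (2 * of_nat (Suc k) + a)"
        unfolding P1l P2l lQc by (simp add: field_simps)
      thus ?thesis using B0 LQ by simp
    qed
    have "degree (smult (1 / (2 * of_nat (Suc k) + a)) P1 * Q + smult (8 / (2 * of_nat (Suc k) + a)) P2 * Qc) = 1 + 4 * k + 4"
      by (rule deg_sum[OF P1d P2d dQ dQc Q0 Qc0 _ _ ne]) (use P1d P2d in auto)
    moreover have "1 / (a * (1/2 - of_nat (Suc k) - b) * (1/2 - of_nat (Suc k) + b)) \<noteq> 0"
      using a0 p0 q0 by simp
    ultimately show "degree (Qp (Suc k) a b) = 1 + 4 * Suc k"
      unfolding Qp.simps(2) P1_def[symmetric] P2_def[symmetric] Q_def[symmetric] Qc_def[symmetric] degree_smult_eq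
      by simp
  qed
qed


theorem theorem8:
  fixes a b :: complex and k :: nat
  assumes a_gen: "\<forall>m::nat. a + of_nat m \<noteq> 0"
    and b_gen: "\<forall>j::nat. b \<noteq> of_nat j + 1/2 \<and> b \<noteq> - (of_nat j + 1/2)"
    and low1: "\<forall>m::nat. 3/4 + of_nat k/2 + a/2 + b/2 + of_nat m \<noteq> 0"
    and low2: "\<forall>m::nat. 3/4 + of_nat k/2 + a/2 - b/2 + of_nat m \<noteq> 0"
  shows "(\<exists>p :: complex poly. degree p = 1 + 4* k \<and> (\<forall>n. Q3 k n a b = poly p n))
    \<and> (\<exists>r>0. \<forall>x::complex. norm x < r \<longrightarrow>
         (let c = (\<lambda>n. pochhammer a n * pochhammer (1/2 - of_nat k - b) n
                        * pochhammer (1/2 - of_nat k + b) n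
                      / (fact n * pochhammer (3/4 + of_nat k/2 + a/2 + b/2) n
                                * pochhammer (3/4 + of_nat k/2 + a/2 - b/2) n)
                      * Q3 k (of_nat n) a b * x ^ n)
          in summable c \<and>
             hyp3F2 (1/3 + 2* of_nat k/3 + a/3) (2/3 + 2* of_nat k/3 + a/3) (1 + 2* of_nat k/3 + a/3)
                    (3/4 + of_nat k/2 + a/2 + b/2) (3/4 + of_nat k/2 + a/2 - b/2)
                    (- 27 * x / (1 - 4* x) ^ 3)
             = inverse ((1 + 8* x) ^ (1 + 2* k)) * (1 - 4* x) powr (1 + 2* of_nat k + a) * suminf c))"
proof
  show "\<exists>p :: complex poly. degree p = 1 + 4* k \<and> (\<forall>n. Q3 k n a b = poly p n)"
    using Qp_degree[OF b_gen] a_gen Qp_poly by metis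
next
  define A where "A = 1 + 2 * of_nat k + a"
  define c where "c = cpar b k a"
  define d where "d = dpar b k a"
  define F where "F = FA c d A"
  have cn: "\<forall>m::nat. cpar b k a + of_nat m \<noteq> 0" "\<forall>m::nat. dpar b k a + of_nat m \<noteq> 0"
    using low1 low2 by (simp_all add: cpar_def dpar_def)
  have Gid: "Gk b k a = (1 + 8 * fps_X)^(1 + 2 * k) * V (-A) * (F oo Zf)"
    using formal[OF b_gen, of k] a_gen cn unfolding A_def F_def c_def d_def by (simp add: add.commute)
  have u: "\<forall>m::nat. A/3 + of_nat m \<noteq> 0" "\<forall>m::nat. (A+1)/3 + of_nat m \<noteq> 0" "\<forall>m::nat. (A+2)/3 + of_nat m \<noteq> 0"
  proof (safe)
    fix m :: nat
    assume "A/3 + of_nat m = 0"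
    hence "a + of_nat (1 + 2*k + 3*m) = 0" unfolding A_def by (simp add: field_simps)
    thus False using a_gen by blast
  next
    fix m :: nat
    assume "(A+1)/3 + of_nat m = 0"
    hence "a + of_nat (2 + 2*k + 3*m) = 0" unfolding A_def by (simp add: field_simps)
    thus False using a_gen by blast
  next
    fix m :: nat
    assume "(A+2)/3 + of_nat m = 0"
    hence "a + of_nat (3 + 2*k + 3*m) = 0" unfolding A_def by (simp add: field_simps)
    thus False using a_gen by blast
  qed
  have Frad: "fps_conv_radius F > 0"
    unfolding F_def FA_def c_def d_def by (rule HF_radius[OF u cn])
  obtain r where r: "r > 0" and rr: "\<forall>x::complex. norm x < r \<longrightarrow> summable (\<lambda>n. Gk b k a $ n * x ^ n) \<and>
     eval_fps F (-27 * x / (1 - 4 * x)^3) = inverse ((1 + 8 * x)^(1 + 2 * k)) * (1 - 4 * x) powr A * suminf (\<lambda>n. Gk b k a $ n * x ^ n)"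
    using analytic_part[OF Frad Gid] by blast
  have hypeq: "hyp3F2 (1/3 + 2* of_nat k/3 + a/3) (2/3 + 2* of_nat k/3 + a/3) (1 + 2* of_nat k/3 + a/3)
                    (3/4 + of_nat k/2 + a/2 + b/2) (3/4 + of_nat k/2 + a/2 - b/2) z = eval_fps F z" for z
  proof -
    have e: "A/3 = 1/3 + 2* of_nat k/3 + a/3" "(A+1)/3 = 2/3 + 2* of_nat k/3 + a/3" "(A+2)/3 = 1 + 2* of_nat k/3 + a/3"
      by (simp_all add: A_def field_simps)
    show ?thesis unfolding F_def FA_def HF_def e c_def d_def cpar_def dpar_def eval_fps_def hyp3F2_def fps_nth_Abs_fps ..
  qed
  have ceq: "(\<lambda>n. pochhammer a n * pochhammer (1/2 - of_nat k - b) n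
                        * pochhammer (1/2 - of_nat k + b) n
                      / (fact n * pochhammer (3/4 + of_nat k/2 + a/2 + b/2) n
                                * pochhammer (3/4 + of_nat k/2 + a/2 - b/2) n)
                      * Q3 k (of_nat n) a b * x ^ n) = (\<lambda>n. Gk b k a $ n * x ^ n)" for x :: complex
    by (simp add: Gk_def tt_def)
  show "\<exists>r>0. \<forall>x::complex. norm x < r \<longrightarrow>
         (let c = (\<lambda>n. pochhammer a n * pochhammer (1/2 - of_nat k - b) n
                        * pochhammer (1/2 - of_nat k + b) n
                      / (fact n * pochhammer (3/4 + of_nat k/2 + a/2 + b/2) n
                                * pochhammer (3/4 + of_nat k/2 + a/2 - b/2) n)
                      * Q3 k (of_nat n) a b * x ^ n)
          in summable c \<and>
             hyp3F2 (1/3 + 2* of_nat k/3 + a/3) (2/3 + 2* of_nat k/3 + a/3) (1 + 2* of_nat k/3 + a/3)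
                    (3/4 + of_nat k/2 + a/2 + b/2) (3/4 + of_nat k/2 + a/2 - b/2)
                    (- 27 * x / (1 - 4* x) ^ 3)
             = inverse ((1 + 8* x) ^ (1 + 2* k)) * (1 - 4* x) powr (1 + 2* of_nat k + a) * suminf c)"
    using r rr unfolding Let_def ceq hypeq A_def by blast
qed

end
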